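(* Let $\mathbf{k}=\bigoplus_{i=1}^N\mathbb{F}_2$, let $A$ and $B$ be differential graded algebras over $\mathbf{k}$, and let $f,g\colon A\to B$ be $\mathcal{A}_\infty$-homomorphisms. Suppose the rank-one type DA bimodules ${}^{B}[f]_A$ and ${}^{B}[g]_A$ are homotopy equivalent. Then $f$ and $g$ induce conjugate maps on homology: there is an invertible element $u\in H_*(B)$ such that for every cycle $a\in A$, $[f_1(a)]=u\,[g_1(a)]\,u^{-1}$ in $H_*(B)$.
   Context: Work over $\mathbb{F}_2$ (no signs); tensor products are over $\mathbf{k}$. An $\mathcal{A}_\infty$-homomorphism $f\colon A\to B$ of differential algebras is a family of $\mathbf{k}$-bimodule maps $f_n\colon A^{\otimes n}\to B$, $n\ge1$, with $d_Bf_n(a_1,\dots,a_n)+\sum_i f_n(a_1,\dots,da_i,\dots,a_n)+\sum_{i=1}^{n-1}f_{n-1}(a_1,\dots,a_ia_{i+1},\dots,a_n)+\sum_{j=1}^{n-1}f_j(a_1,\dots,a_j)f_{n-j}(a_{j+1},\dots,a_n)=0$. A type DA structure ${}^BX_A$ is a $\mathbf{k}$-bimodule $X$ with maps $\delta_{1+n}\colon X\otimes A^{\otimes n}\to B\otimes X$ ($n\ge0$) satisfying $\sum_{j=0}^n(\mu_B\otimes\mathrm{Id})(\mathrm{Id}_B\otimes\delta_{1+n-j})(\delta_{1+j}(x,a_1,\dots,a_j)\otimes a_{j+1}\otimes\cdots\otimes a_n)+(d_B\otimes\mathrm{Id})\delta_{1+n}(x,a_1,\dots,a_n)+\sum_i\delta_{1+n}(x,\dots,da_i,\dots)+\sum_{i=1}^{n-1}\delta_n(x,\dots,a_ia_{i+1},\dots)=0$.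 The bimodule ${}^B[f]_A$ has underlying $\mathbf{k}$-bimodule $\mathbf{k}$, $\delta_1=0$, and (identifying $\mathbf{k}\otimes A^{\otimes n}$ with $A^{\otimes n}$ and $B\otimes\mathbf{k}$ with $B$) $\delta_{1+n}=f_n$ for $n\ge1$. A morphism $\phi\colon X\to Y$ of type DA structures is a family $\phi_{1+n}\colon X\otimes A^{\otimes n}\to B\otimes Y$; its differential is $(\partial\phi)_{1+n}(x,a_1,\dots,a_n)=\sum_{j=0}^n(\mu_B\otimes\mathrm{Id})(\mathrm{Id}\otimes\delta^Y_{1+n-j})(\phi_{1+j}(x,a_1,\dots,a_j)\otimes a_{j+1}\otimes\cdots\otimes a_n)+\sum_{j=0}^n(\mu_B\otimes\mathrm{Id})(\mathrm{Id}\otimes\phi_{1+n-j})(\delta^X_{1+j}(x,a_1,\dots,a_j)\otimes a_{j+1}\otimes\cdots\otimes a_n)+(d_B\otimes\mathrm{Id})\phi_{1+n}(x,a_1,\dots,a_n)+\sum_i\phi_{1+n}(x,\dots,da_i,\dots)+\sum_{i=1}^{n-1}\phi_n(x,\dots,a_ia_{i+1},\dots)$. Composition is $(\psi\circ\phi)_{1+n}(x,a_1,\dots,a_n)=\sum_j(\mu_B\otimes\mathrm{Id})(\mathrm{Id}\otimes\psi_{1+n-j})(\phi_{1+j}(x,a_1,\dots,a_j)\otimes a_{j+1}\otimes\cdots\otimes a_n)$, and the identity has $\mathrm{Id}_1(x)=1\otimes x$, $\mathrm{Id}_{1+n}=0$ for $n\ge1$. Two type DA structures are homotopy equivalent if there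 are morphisms $\phi\colon X\to Y$, $\psi\colon Y\to X$ with $\partial\phi=\partial\psi=0$ and morphisms $F,G$ with $\partial F=\psi\circ\phi+\mathrm{Id}_X$ and $\partial G=\phi\circ\psi+\mathrm{Id}_Y$. *)

theory Defs
  imports Main
begin

text \<open>Ground ring k = F2^N, modelled by N orthogonal idempotents e 0, ..., e (N-1).\<close>

definition unit_k :: "nat \<Rightarrow> (nat \<Rightarrow> 'a::ring) \<Rightarrow> 'a" where
  "unit_k N e = (\<Sum>i<N. e i)"

definition dga_over :: "nat \<Rightarrow> (nat \<Rightarrow> 'a::ring) \<Rightarrow> ('a \<Rightarrow> 'a) \<Rightarrow> bool" where
  "dga_over N e d \<longleftrightarrow>
     (\<forall>x::'a. x + x = 0) \<and>
     (\<forall>i<N. \<forall>j<N. e i * e j = (if i = j then e i else 0)) \<and>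
     (\<forall>x. unit_k N e * x = x \<and> x * unit_k N e = x) \<and>
     (\<forall>i<N. d (e i) = 0) \<and>
     (\<forall>x y. d (x + y) = d x + d y) \<and>
     (\<forall>x y. d (x * y) = d x * y + x * d y) \<and>
     (\<forall>x. d (d x) = 0)"

text \<open>A k-bimodule map A^{\<otimes>_k n} -> B is represented by its values on lists of length n:
  additive in each slot, k-balanced, and compatible with the outer k-actions.
  These conditions only concern nonempty lists.\<close>

definition kmap_pos :: "nat \<Rightarrow> (nat \<Rightarrow> 'a::ring) \<Rightarrow> (nat \<Rightarrow> 'b::ring) \<Rightarrow> ('a list \<Rightarrow> 'b) \<Rightarrow> bool" where
  "kmap_pos N eA eB \<phi> \<longleftrightarrow>
     (\<forall>xs x y ys. \<phi> (xs @ (x + y) # ys) = \<phi> (xs @ x # ys) + \<phi> (xs @ y # ys)) \<and>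
     (\<forall>xs x y ys. \<forall>i<N. \<phi> (xs @ (x * eA i) # y # ys) = \<phi> (xs @ x # (eA i * y) # ys)) \<and>
     (\<forall>x xs. \<forall>i<N. \<phi> ((eA i * x) # xs) = eB i * \<phi> (x # xs)) \<and>
     (\<forall>xs x. \<forall>i<N. \<phi> (xs @ [x * eA i]) = \<phi> (xs @ [x]) * eB i)"

text \<open>Morphism component phi_1 : k -> B (tensor) k = B is a bimodule map, i.e. given by
  the element phi [] commuting with the idempotents.\<close>

definition kmor :: "nat \<Rightarrow> (nat \<Rightarrow> 'a::ring) \<Rightarrow> (nat \<Rightarrow> 'b::ring) \<Rightarrow> ('a list \<Rightarrow> 'b) \<Rightarrow> bool" where
  "kmor N eA eB \<phi> \<longleftrightarrow> kmap_pos N eA eB \<phi> \<and> (\<forall>i<N. eB i * \<phi> [] = \<phi> [] * eB i)"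

definition merge_at :: "nat \<Rightarrow> 'a::times list \<Rightarrow> 'a list" where
  "merge_at i as = take i as @ (as ! i * as ! Suc i) # drop (Suc (Suc i)) as"

definition ainf_hom ::
  "nat \<Rightarrow> (nat \<Rightarrow> 'a::ring) \<Rightarrow> ('a \<Rightarrow> 'a) \<Rightarrow> (nat \<Rightarrow> 'b::ring) \<Rightarrow> ('b \<Rightarrow> 'b) \<Rightarrow> ('a list \<Rightarrow> 'b) \<Rightarrow> bool" where
  "ainf_hom N eA dA eB dB f \<longleftrightarrow> kmap_pos N eA eB f \<and>
     (\<forall>as. as \<noteq> [] \<longrightarrow>
        dB (f as) + (\<Sum>i<length as. f (as[i := dA (as ! i)]))
        + (\<Sum>i<length as - 1. f (merge_at i as))
        + (\<Sum>j\<in>{1..<length as}. f (take j as) * f (drop j as)) = 0)"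

text \<open>The rank-one type DA structure [f]: delta_1 = 0, delta_{1+n} = f_n.\<close>

definition rk1 :: "('a list \<Rightarrow> 'b::zero) \<Rightarrow> 'a list \<Rightarrow> 'b" where
  "rk1 f as = (if as = [] then 0 else f as)"

definition dmor ::
  "('a::ring \<Rightarrow> 'a) \<Rightarrow> ('b::ring \<Rightarrow> 'b) \<Rightarrow> ('a list \<Rightarrow> 'b) \<Rightarrow> ('a list \<Rightarrow> 'b) \<Rightarrow> ('a list \<Rightarrow> 'b) \<Rightarrow> 'a list \<Rightarrow> 'b" where
  "dmor dA dB \<delta>X \<delta>Y \<phi> as =
     (\<Sum>j\<le>length as. \<phi> (take j as) * \<delta>Y (drop j as))
     + (\<Sum>j\<le>length as. \<delta>X (take j as) * \<phi> (drop j as))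
     + dB (\<phi> as)
     + (\<Sum>i<length as. \<phi> (as[i := dA (as ! i)]))
     + (\<Sum>i<length as - 1. \<phi> (merge_at i as))"

definition comp_mor :: "('a list \<Rightarrow> 'b::ring) \<Rightarrow> ('a list \<Rightarrow> 'b) \<Rightarrow> 'a list \<Rightarrow> 'b" where
  "comp_mor \<psi> \<phi> as = (\<Sum>j\<le>length as. \<phi> (take j as) * \<psi> (drop j as))"

definition id_mor :: "nat \<Rightarrow> (nat \<Rightarrow> 'b::ring) \<Rightarrow> 'a list \<Rightarrow> 'b" where
  "id_mor N eB as = (if as = [] then unit_k N eB else 0)"

definition DA_htpy_equiv ::
  "nat \<Rightarrow> (nat \<Rightarrow> 'a::ring) \<Rightarrow> ('a \<Rightarrow> 'a) \<Rightarrow> (nat \<Rightarrow> 'b::ring) \<Rightarrow> ('b \<Rightarrow> 'b)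
   \<Rightarrow> ('a list \<Rightarrow> 'b) \<Rightarrow> ('a list \<Rightarrow> 'b) \<Rightarrow> bool" where
  "DA_htpy_equiv N eA dA eB dB \<delta>X \<delta>Y \<longleftrightarrow>
     (\<exists>\<phi> \<psi> F G. kmor N eA eB \<phi> \<and> kmor N eA eB \<psi> \<and> kmor N eA eB F \<and> kmor N eA eB G \<and>
        (\<forall>as. dmor dA dB \<delta>X \<delta>Y \<phi> as = 0) \<and>
        (\<forall>as. dmor dA dB \<delta>Y \<delta>X \<psi> as = 0) \<and>
        (\<forall>as. dmor dA dB \<delta>X \<delta>X F as = comp_mor \<psi> \<phi> as + id_mor N eB as) \<and>
        (\<forall>as. dmor dA dB \<delta>Y \<delta>Y G as = comp_mor \<phi> \<psi> as + id_mor N eB as))"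

definition cycles :: "('a \<Rightarrow> 'a::zero) \<Rightarrow> 'a set" where
  "cycles d = {x. d x = 0}"

definition boundaries :: "('a \<Rightarrow> 'a) \<Rightarrow> 'a set" where
  "boundaries d = {y. \<exists>x. y = d x}"

end

theory Submission
  imports Defs
begin

lemma neg_char2: fixes y :: "'b::ring" assumes "y + y = 0" shows "- y = y"
  using assms by (simp add: neg_eq_iff_add_eq_0)

lemma kmap_zero: assumes "kmap_pos N eA eB \<phi>" shows "\<phi> [0] = 0"
proof -
  have "\<phi> ([] @ (0 + 0) # []) = \<phi> ([] @ 0 # []) + \<phi> ([] @ 0 # [])"
    using assms unfolding kmap_pos_def by blast
  thus ?thesis by simp
qed

lemma cancel2: fixes x y z :: "'b::ring" assumes "\<And>w::'b. w + w = 0" "x + y + z = 0"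
  shows "y = x + z"
proof -
  have "y = (x + y + z) - x - z" by (simp add: algebra_simps)
  also have "\<dots> = - x + - z" using assms(2) by simp
  also have "\<dots> = x + z" using assms(1) neg_char2 by metis
  finally show ?thesis .
qed

theorem lemma8p5:
  fixes N :: nat
    and eA :: "nat \<Rightarrow> 'a::ring" and dA :: "'a \<Rightarrow> 'a"
    and eB :: "nat \<Rightarrow> 'b::ring" and dB :: "'b \<Rightarrow> 'b"
    and f g :: "'a list \<Rightarrow> 'b"
  assumes "dga_over N eA dA" and "dga_over N eB dB"
    and "ainf_hom N eA dA eB dB f" and "ainf_hom N eA dA eB dB g"
    and "DA_htpy_equiv N eA dA eB dB (rk1 f) (rk1 g)"
  shows "\<exists>u v. u \<in> cycles dB \<and> v \<in> cycles dB \<and>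
           u * v - unit_k N eB \<in> boundaries dB \<and> v * u - unit_k N eB \<in> boundaries dB \<and>
           (\<forall>a \<in> cycles dA. f [a] - u * g [a] * v \<in> boundaries dB)"
proof -
  have ch: "\<And>x::'b. x + x = 0" and add: "\<And>x y. dB (x + y) = dB x + dB y"
    and leib: "\<And>x y. dB (x * y) = dB x * y + x * dB y"
    and un: "\<And>x. x * unit_k N eB = x"
    using assms(2) unfolding dga_over_def by blast+
  have neg: "\<And>x::'b. - x = x" using ch neg_char2 by blast
  have mi: "\<And>x y::'b. x - y = x + y" using neg by (metis diff_conv_add_uminus)
  obtain \<phi> \<psi> F G where km: "kmor N eA eB \<phi>" "kmor N eA eB \<psi>" "kmor N eA eB F" "kmor N eA eB G"
    and h\<phi>: "\<forall>as. dmor dA dB (rk1 f) (rk1 g) \<phi> as = 0"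
    and h\<psi>: "\<forall>as. dmor dA dB (rk1 g) (rk1 f) \<psi> as = 0"
    and hF: "\<forall>as. dmor dA dB (rk1 f) (rk1 f) F as = comp_mor \<psi> \<phi> as + id_mor N eB as"
    and hG: "\<forall>as. dmor dA dB (rk1 g) (rk1 g) G as = comp_mor \<phi> \<psi> as + id_mor N eB as"
    using assms(5) unfolding DA_htpy_equiv_def by (elim exE conjE) blast
  have c\<phi>: "dB (\<phi> []) = 0" using h\<phi>[rule_format, of "[]"] by (simp add: dmor_def rk1_def)
  have c\<psi>: "dB (\<psi> []) = 0" using h\<psi>[rule_format, of "[]"] by (simp add: dmor_def rk1_def)
  have eF: "dB (F []) = \<phi> [] * \<psi> [] + unit_k N eB"
    using hF[rule_format, of "[]"] by (simp add: dmor_def rk1_def comp_mor_def id_mor_def)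
  have eG: "dB (G []) = \<psi> [] * \<phi> [] + unit_k N eB"
    using hG[rule_format, of "[]"] by (simp add: dmor_def rk1_def comp_mor_def id_mor_def)
  have p0: "\<phi> [0] = 0" using km(1) kmap_zero unfolding kmor_def by blast
  have f0: "f [0] = 0" using assms(3) kmap_zero unfolding ainf_hom_def by blast
  have fa: "\<And>as. as \<noteq> [] \<Longrightarrow>
        dB (f as) + (\<Sum>i<length as. f (as[i := dA (as ! i)]))
        + (\<Sum>i<length as - 1. f (merge_at i as))
        + (\<Sum>j\<in>{1..<length as}. f (take j as) * f (drop j as)) = 0"
    using assms(3) unfolding ainf_hom_def by blast
  have main: "f [a] - \<phi> [] * g [a] * \<psi> [] \<in> boundaries dB" if a: "a \<in> cycles dA" for a
  proof -
    have da: "dA a = 0" using a by (simp add: cycles_def)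
    have "dmor dA dB (rk1 f) (rk1 g) \<phi> [a] = 0" using h\<phi> by blast
    hence e1: "\<phi> [] * g [a] + f [a] * \<phi> [] + dB (\<phi> [a]) = 0"
      using da p0 by (simp add: dmor_def rk1_def atMost_Suc)
    have cf: "dB (f [a]) = 0"
      using fa[of "[a]"] da f0 by simp
    have e1': "f [a] * \<phi> [] = \<phi> [] * g [a] + dB (\<phi> [a])"
      using cancel2[OF ch e1] .
    have "dB (\<phi> [a] * \<psi> [] + f [a] * F []) = dB (\<phi> [a]) * \<psi> [] + f [a] * dB (F [])"
      using add leib c\<psi> cf by simp
    also have "\<dots> = dB (\<phi> [a]) * \<psi> [] + f [a] * \<phi> [] * \<psi> [] + f [a]"
      by (simp add: eF distrib_left mult.assoc add.assoc un)
    also have "\<dots> = f [a] + \<phi> [] * g [a] * \<psi> []"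
      by (simp add: e1' distrib_right add.assoc add.left_commute ch)
    finally show ?thesis unfolding boundaries_def mi by (metis (mono_tags, lifting) mem_Collect_eq)
  qed
  have b1: "\<phi> [] * \<psi> [] - unit_k N eB \<in> boundaries dB"
    using eF unfolding boundaries_def mi by (metis (mono_tags, lifting) mem_Collect_eq)
  have b2: "\<psi> [] * \<phi> [] - unit_k N eB \<in> boundaries dB"
    using eG unfolding boundaries_def mi by (metis (mono_tags, lifting) mem_Collect_eq)
  have "\<phi> [] \<in> cycles dB" "\<psi> [] \<in> cycles dB" using c\<phi> c\<psi> by (simp_all add: cycles_def)
  thus ?thesis using b1 b2 main by blast
qed

end
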